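(* Let $G$ be a finite simple graph (with no restriction on its clique number). If $G$ is claw-free and every block of $G$ is a closed graph, then $G$ is strongly chordal and claw-free.
   Context: A strong elimination order of $G$ is an ordering $v_1,\dots,v_n$ of its vertices that is a perfect elimination order (whenever $v_iv_j,v_iv_k\in E(G)$ with $i<j,k$, then $v_jv_k\in E(G)$) and such that whenever $v_iv_k, v_kv_j, v_iv_\ell\in E(G)$ with $i<k<\ell$ and $i<j$, then $v_jv_\ell\in E(G)$; $G$ is strongly chordal if it has one. The claw is $K_{1,3}$. A closed order is an ordering $v_1,\dots,v_n$ such that whenever $v_iv_j,v_iv_k\in E(G)$ and either $i<j,k$ or $i>j,k$, then $v_jv_k\in E(G)$; $G$ is closed if it has one. A block is a maximal subgraph without cut vertices (2-connected). *)

theory Defs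
  imports Main
begin

definition finite_simple_graph :: "'a set \<Rightarrow> ('a \<Rightarrow> 'a \<Rightarrow> bool) \<Rightarrow> bool" where
  "finite_simple_graph V E \<longleftrightarrow> finite V \<and> (\<forall>x y. E x y \<longrightarrow> E y x) \<and> (\<forall>x. \<not> E x x)
     \<and> (\<forall>x y. E x y \<longrightarrow> x \<in> V \<and> y \<in> V)"

definition ordering_of :: "'a set \<Rightarrow> 'a list \<Rightarrow> bool" where
  "ordering_of V vs \<longleftrightarrow> distinct vs \<and> set vs = V"

definition perfect_elim_order :: "('a \<Rightarrow> 'a \<Rightarrow> bool) \<Rightarrow> 'a list \<Rightarrow> bool" where
  "perfect_elim_order E vs \<longleftrightarrow>
    (\<forall>i j k. i < length vs \<and> j < length vs \<and> k < length vs \<and> i < j \<and> i < k \<and> j \<noteq> k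
       \<and> E (vs!i) (vs!j) \<and> E (vs!i) (vs!k) \<longrightarrow> E (vs!j) (vs!k))"

definition strong_elim_order :: "('a \<Rightarrow> 'a \<Rightarrow> bool) \<Rightarrow> 'a list \<Rightarrow> bool" where
  "strong_elim_order E vs \<longleftrightarrow> perfect_elim_order E vs \<and>
    (\<forall>i j k l. i < length vs \<and> j < length vs \<and> k < length vs \<and> l < length vs
       \<and> i < k \<and> k < l \<and> i < j \<and> j \<noteq> l
       \<and> E (vs!i) (vs!k) \<and> E (vs!k) (vs!j) \<and> E (vs!i) (vs!l) \<longrightarrow> E (vs!j) (vs!l))"

definition strongly_chordal :: "'a set \<Rightarrow> ('a \<Rightarrow> 'a \<Rightarrow> bool) \<Rightarrow> bool" where
  "strongly_chordal V E \<longleftrightarrow> (\<exists>vs. ordering_of V vs \<and> strong_elim_order E vs)"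

definition closed_order :: "('a \<Rightarrow> 'a \<Rightarrow> bool) \<Rightarrow> 'a list \<Rightarrow> bool" where
  "closed_order E vs \<longleftrightarrow>
    (\<forall>i j k. i < length vs \<and> j < length vs \<and> k < length vs \<and> j \<noteq> k
       \<and> ((i < j \<and> i < k) \<or> (i > j \<and> i > k))
       \<and> E (vs!i) (vs!j) \<and> E (vs!i) (vs!k) \<longrightarrow> E (vs!j) (vs!k))"

definition closed_graph :: "'a set \<Rightarrow> ('a \<Rightarrow> 'a \<Rightarrow> bool) \<Rightarrow> bool" where
  "closed_graph V E \<longleftrightarrow> (\<exists>vs. ordering_of V vs \<and> closed_order E vs)"

definition claw_free :: "'a set \<Rightarrow> ('a \<Rightarrow> 'a \<Rightarrow> bool) \<Rightarrow> bool" where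
  "claw_free V E \<longleftrightarrow> \<not> (\<exists>a\<in>V. \<exists>b\<in>V. \<exists>c\<in>V. \<exists>d\<in>V. distinct [a,b,c,d]
      \<and> E a b \<and> E a c \<and> E a d \<and> \<not> E b c \<and> \<not> E b d \<and> \<not> E c d)"

definition induced :: "('a \<Rightarrow> 'a \<Rightarrow> bool) \<Rightarrow> 'a set \<Rightarrow> 'a \<Rightarrow> 'a \<Rightarrow> bool" where
  "induced E S = (\<lambda>x y. x \<in> S \<and> y \<in> S \<and> E x y)"

definition joined_in :: "('a \<Rightarrow> 'a \<Rightarrow> bool) \<Rightarrow> 'a set \<Rightarrow> 'a \<Rightarrow> 'a \<Rightarrow> bool" where
  "joined_in E S x y \<longleftrightarrow> x \<in> S \<and> y \<in> S \<and> (induced E S)\<^sup>*\<^sup>* x y"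

definition connected_on :: "('a \<Rightarrow> 'a \<Rightarrow> bool) \<Rightarrow> 'a set \<Rightarrow> bool" where
  "connected_on E S \<longleftrightarrow> S \<noteq> {} \<and> (\<forall>x\<in>S. \<forall>y\<in>S. joined_in E S x y)"

definition cut_vertex_on :: "('a \<Rightarrow> 'a \<Rightarrow> bool) \<Rightarrow> 'a set \<Rightarrow> 'a \<Rightarrow> bool" where
  "cut_vertex_on E S v \<longleftrightarrow> v \<in> S \<and> (\<exists>x y. joined_in E S x y \<and> x \<noteq> v \<and> y \<noteq> v
      \<and> \<not> joined_in E (S - {v}) x y)"

definition nonseparable_on :: "('a \<Rightarrow> 'a \<Rightarrow> bool) \<Rightarrow> 'a set \<Rightarrow> bool" where
  "nonseparable_on E S \<longleftrightarrow> connected_on E S \<and> (\<forall>v. \<not> cut_vertex_on E S v)"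

definition is_block :: "'a set \<Rightarrow> ('a \<Rightarrow> 'a \<Rightarrow> bool) \<Rightarrow> 'a set \<Rightarrow> bool" where
  "is_block V E B \<longleftrightarrow> B \<subseteq> V \<and> nonseparable_on E B
     \<and> (\<forall>B'. B \<subset> B' \<and> B' \<subseteq> V \<longrightarrow> \<not> nonseparable_on E B')"

end

theory Submission
  imports Defs
begin

definition prec :: "'a list \<Rightarrow> 'a \<Rightarrow> 'a \<Rightarrow> bool" where
  "prec xs x y \<longleftrightarrow> (\<exists>i j. i < j \<and> j < length xs \<and> xs!i = x \<and> xs!j = y)"

lemma prec_Nil[simp]: "\<not> prec [] x y"
  by (simp add: prec_def)

lemma prec_Cons: "prec (z#xs) x y \<longleftrightarrow> (x = z \<and> y \<in> set xs) \<or> prec xs x y"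
proof
  assume "prec (z#xs) x y"
  then obtain i j where h: "i < j" "j < length (z#xs)" "(z#xs)!i = x" "(z#xs)!j = y"
    unfolding prec_def by blast
  show "(x = z \<and> y \<in> set xs) \<or> prec xs x y"
  proof (cases i)
    case 0
    then have "x = z" using h by simp
    moreover obtain j' where "j = Suc j'" using h 0 by (cases j) auto
    ultimately show ?thesis using h by auto
  next
    case (Suc i')
    obtain j' where "j = Suc j'" using h Suc by (cases j) auto
    then show ?thesis using h Suc unfolding prec_def by auto
  qed
next
  assume "(x = z \<and> y \<in> set xs) \<or> prec xs x y"
  then show "prec (z#xs) x y"
  proof
    assume a: "x = z \<and> y \<in> set xs"
    then obtain j where "j < length xs" "xs!j = y" by (auto simp: in_set_conv_nth)
    then show ?thesis using a unfolding prec_def by (intro exI[of _ 0] exI[of _ "Suc j"]) auto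
  next
    assume "prec xs x y"
    then obtain i j where "i < j" "j < length xs" "xs!i = x" "xs!j = y" unfolding prec_def by blast
    then show ?thesis unfolding prec_def by (intro exI[of _ "Suc i"] exI[of _ "Suc j"]) auto
  qed
qed

lemma prec_set: "prec xs x y \<Longrightarrow> x \<in> set xs \<and> y \<in> set xs"
  by (induction xs) (auto simp: prec_Cons)

lemma prec_append: "prec (xs @ ys) x y \<longleftrightarrow> prec xs x y \<or> prec ys x y \<or> (x \<in> set xs \<and> y \<in> set ys)"
  by (induction xs) (auto simp: prec_Cons)

lemma prec_single[simp]: "\<not> prec [a] x y"
  by (simp add: prec_Cons)

lemma prec_rev: "prec (rev xs) x y \<longleftrightarrow> prec xs y x"
  by (induction xs) (auto simp: prec_Cons prec_append)

lemma prec_filter: "prec (filter P xs) x y \<longleftrightarrow> P x \<and> P y \<and> prec xs x y"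
  by (induction xs) (auto simp: prec_Cons dest: prec_set)

lemma prec_irrefl: "distinct xs \<Longrightarrow> \<not> prec xs x x"
  by (induction xs) (auto simp: prec_Cons dest: prec_set)

lemma prec_trans: "distinct xs \<Longrightarrow> prec xs x y \<Longrightarrow> prec xs y z \<Longrightarrow> prec xs x z"
  by (induction xs) (auto simp: prec_Cons dest: prec_set)

lemma prec_total: "x \<in> set xs \<Longrightarrow> y \<in> set xs \<Longrightarrow> x \<noteq> y \<Longrightarrow> prec xs x y \<or> prec xs y x"
  by (induction xs) (auto simp: prec_Cons)

lemma prec_asym: "distinct xs \<Longrightarrow> prec xs x y \<Longrightarrow> \<not> prec xs y x"
  using prec_trans prec_irrefl by metis

lemma prec_nth: "i < j \<Longrightarrow> j < length xs \<Longrightarrow> prec xs (xs!i) (xs!j)"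
  unfolding prec_def by blast

lemma prec_nth_iff:
  assumes d: "distinct xs" "i < length xs" "j < length xs"
  shows "prec xs (xs!i) (xs!j) \<longleftrightarrow> i < j"
proof
  assume "prec xs (xs!i) (xs!j)"
  then obtain ia ja where "ia < ja" "ja < length xs" "xs ! ia = xs ! i" "xs ! ja = xs ! j"
    unfolding prec_def by blast
  with d show "i < j" using nth_eq_iff_index_eq by (metis order.strict_trans)
qed (use d prec_nth in blast)

definition local_ok :: "('a \<Rightarrow> 'a \<Rightarrow> bool) \<Rightarrow> 'a list \<Rightarrow> 'a \<Rightarrow> bool" where
  "local_ok E vs x \<longleftrightarrow>
    (\<forall>y z. prec vs x y \<longrightarrow> prec vs x z \<longrightarrow> y \<noteq> z \<longrightarrow> E x y \<longrightarrow> E x z \<longrightarrow> E y z) \<and>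
    (\<forall>k j l. prec vs x k \<longrightarrow> prec vs k l \<longrightarrow> prec vs x j \<longrightarrow> j \<noteq> l \<longrightarrow> E x k \<longrightarrow> E k j \<longrightarrow> E x l \<longrightarrow> E j l)"

definition SE :: "('a \<Rightarrow> 'a \<Rightarrow> bool) \<Rightarrow> 'a list \<Rightarrow> bool" where
  "SE E vs \<longleftrightarrow> (\<forall>x. local_ok E vs x)"

definition CL :: "('a \<Rightarrow> 'a \<Rightarrow> bool) \<Rightarrow> 'a list \<Rightarrow> bool" where
  "CL E vs \<longleftrightarrow> (\<forall>x y z. ((prec vs x y \<and> prec vs x z) \<or> (prec vs y x \<and> prec vs z x)) \<longrightarrow> y \<noteq> z
      \<longrightarrow> E x y \<longrightarrow> E x z \<longrightarrow> E y z)"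

definition CP :: "('a \<Rightarrow> 'a \<Rightarrow> bool) \<Rightarrow> 'a list \<Rightarrow> bool" where
  "CP E vs \<longleftrightarrow> (\<forall>x y z. prec vs x y \<longrightarrow> prec vs y z \<longrightarrow> E x z \<longrightarrow> E x y \<and> E y z)"

lemma local_ok_transfer:
  assumes "local_ok E vs x"
    and i: "\<And>y. E x y \<Longrightarrow> prec ws x y \<Longrightarrow> prec vs x y"
    and ii: "\<And>k l. E x k \<Longrightarrow> E x l \<Longrightarrow> prec ws x k \<Longrightarrow> prec ws x l \<Longrightarrow> prec ws k l \<Longrightarrow> prec vs k l"
    and iii: "\<And>k j l. E x k \<Longrightarrow> E x l \<Longrightarrow> prec ws x k \<Longrightarrow> prec ws k l \<Longrightarrow> E k j \<Longrightarrow> prec ws x j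
               \<Longrightarrow> prec vs x j"
    and d: "distinct ws"
  shows "local_ok E ws x"
proof -
  have A: "\<And>y z. prec vs x y \<Longrightarrow> prec vs x z \<Longrightarrow> y \<noteq> z \<Longrightarrow> E x y \<Longrightarrow> E x z \<Longrightarrow> E y z"
   and B: "\<And>k j l. prec vs x k \<Longrightarrow> prec vs k l \<Longrightarrow> prec vs x j \<Longrightarrow> j \<noteq> l \<Longrightarrow> E x k \<Longrightarrow> E k j
             \<Longrightarrow> E x l \<Longrightarrow> E j l"
    using assms(1) unfolding local_ok_def by blast+
  show ?thesis unfolding local_ok_def
  proof (intro conjI allI impI)
    fix y z assume "prec ws x y" "prec ws x z" "y \<noteq> z" "E x y" "E x z"
    then show "E y z" using A i by blast
  next
    fix k j l assume h: "prec ws x k" "prec ws k l" "prec ws x j" "j \<noteq> l" "E x k" "E k j" "E x l"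
    have "prec ws x l" using h d prec_trans by metis
    then show "E j l" using B[of k l j] h i ii iii by blast
  qed
qed

lemma local_ok_clique:
  assumes "\<And>y z. prec vs x y \<Longrightarrow> prec vs x z \<Longrightarrow> y \<noteq> z \<Longrightarrow> E y z" "distinct vs"
  shows "local_ok E vs x"
  unfolding local_ok_def using assms prec_trans by metis

lemma SE_strong:
  assumes "distinct vs" "SE E vs"
  shows "strong_elim_order E vs"
  unfolding strong_elim_order_def perfect_elim_order_def
proof (intro conjI allI impI)
  fix i j k assume h: "i < length vs \<and> j < length vs \<and> k < length vs \<and> i < j \<and> i < k \<and> j \<noteq> k
       \<and> E (vs!i) (vs!j) \<and> E (vs!i) (vs!k)"
  have "local_ok E vs (vs!i)" using assms unfolding SE_def by blast
  moreover have "vs!j \<noteq> vs!k" using h assms(1) nth_eq_iff_index_eq by metis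
  ultimately show "E (vs!j) (vs!k)" using h prec_nth unfolding local_ok_def by metis
next
  fix i j k l assume h: "i < length vs \<and> j < length vs \<and> k < length vs \<and> l < length vs
       \<and> i < k \<and> k < l \<and> i < j \<and> j \<noteq> l
       \<and> E (vs!i) (vs!k) \<and> E (vs!k) (vs!j) \<and> E (vs!i) (vs!l)"
  have "local_ok E vs (vs!i)" using assms unfolding SE_def by blast
  moreover have "vs!j \<noteq> vs!l" using h assms(1) nth_eq_iff_index_eq by metis
  moreover have "prec vs (vs!i) (vs!k)" "prec vs (vs!k) (vs!l)" "prec vs (vs!i) (vs!j)"
    using h prec_nth by auto
  ultimately show "E (vs!j) (vs!l)" using h unfolding local_ok_def by metis
qed

lemma closed_CL:
  assumes "distinct vs" "closed_order E vs"
  shows "CL E vs"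
  unfolding CL_def
proof (intro allI impI)
  fix x y z
  assume h: "(prec vs x y \<and> prec vs x z) \<or> (prec vs y x \<and> prec vs z x)" "y \<noteq> z" "E x y" "E x z"
  have xs: "x \<in> set vs" "y \<in> set vs" "z \<in> set vs" using h(1) prec_set by metis+
  obtain i where i: "i < length vs" "vs!i = x" using xs by (auto simp: in_set_conv_nth)
  obtain j where j: "j < length vs" "vs!j = y" using xs by (auto simp: in_set_conv_nth)
  obtain k where k: "k < length vs" "vs!k = z" using xs by (auto simp: in_set_conv_nth)
  have "(i < j \<and> i < k) \<or> (i > j \<and> i > k)"
    using h(1) prec_nth_iff[OF assms(1)] i j k by metis
  moreover have "j \<noteq> k" using h(2) j k by auto
  ultimately show "E y z" using assms(2) i j k h unfolding closed_order_def by metis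
qed

lemma CL_induced:
  assumes "CL (induced E B) vs" "set vs = B"
  shows "CL E vs"
  using assms prec_set unfolding CL_def induced_def by metis

lemma CL_rev: "CL E (rev vs) \<longleftrightarrow> CL E vs"
  unfolding CL_def prec_rev by blast

lemma CL_SE:
  assumes "CL E vs" "distinct vs" "\<And>a b. E a b \<Longrightarrow> E b a"
  shows "SE E vs"
  unfolding SE_def local_ok_def
proof (intro allI conjI impI)
  fix x y z assume "prec vs x y" "prec vs x z" "y \<noteq> z" "E x y" "E x z"
  then show "E y z" using assms(1) unfolding CL_def by blast
next
  fix x k j l assume h: "prec vs x k" "prec vs k l" "prec vs x j" "j \<noteq> l" "E x k" "E k j" "E x l"
  have xl: "prec vs x l" using h assms(2) prec_trans by metis
  have kl: "E k l" using assms(1) h xl prec_irrefl[OF assms(2)] unfolding CL_def by metis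
  show "E j l"
  proof (cases "j = k")
    case True then show ?thesis using kl by simp
  next
    case False
    then have "prec vs j k \<or> prec vs k j" using prec_total prec_set h by metis
    then show ?thesis
    proof
      assume jk: "prec vs j k"
      have "x \<noteq> j" using h(3) prec_irrefl[OF assms(2)] by metis
      then have "E x j" using assms(1) jk h assms(3) unfolding CL_def by metis
      then show ?thesis using assms(1) h xl unfolding CL_def by metis
    next
      assume "prec vs k j"
      then show ?thesis using assms(1) h kl unfolding CL_def by metis
    qed
  qed
qed

definition conn :: "('a \<Rightarrow> 'a \<Rightarrow> bool) \<Rightarrow> 'a set \<Rightarrow> bool" where
  "conn E S \<longleftrightarrow> (\<forall>x\<in>S. \<forall>y\<in>S. (induced E S)\<^sup>*\<^sup>* x y)"

lemma stay:
  assumes "r\<^sup>*\<^sup>* x y" "x \<in> A" "\<And>a b. a \<in> A \<Longrightarrow> r a b \<Longrightarrow> b \<in> A"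
  shows "y \<in> A"
  using assms(1,2) by (induction rule: rtranclp_induct) (auto intro: assms(3))

lemma escape:
  assumes "r\<^sup>*\<^sup>* x y" "x \<in> A" "y \<notin> A"
  shows "\<exists>a b. a \<in> A \<and> b \<notin> A \<and> r a b"
  using stay[OF assms(1,2)] assms(3) by blast

lemma chain:
  assumes d: "distinct \<tau>" and cp: "CP E \<tau>" and c: "conn E (set \<tau>)" and i: "Suc i < length \<tau>"
  shows "E (\<tau>!i) (\<tau>!Suc i)"
proof -
  let ?L = "set (take (Suc i) \<tau>)"
  have x0: "\<tau>!i \<in> ?L" using i by (simp add: take_Suc_conv_app_nth)
  have y0: "\<tau>!Suc i \<notin> ?L"
  proof
    assume "\<tau>!Suc i \<in> ?L"
    then obtain p where "p < length (take (Suc i) \<tau>)" "take (Suc i) \<tau> ! p = \<tau>!Suc i"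
      by (auto simp: in_set_conv_nth)
    then have "p < Suc i" "\<tau>!p = \<tau>!Suc i" by auto
    moreover have "p < length \<tau>" using \<open>p < Suc i\<close> i by simp
    ultimately have "p = Suc i" using nth_eq_iff_index_eq[OF d] i by blast
    then show False using \<open>p < Suc i\<close> by simp
  qed
  have "(induced E (set \<tau>))\<^sup>*\<^sup>* (\<tau>!i) (\<tau>!Suc i)" using c i unfolding conn_def by auto
  then obtain a b where ab: "a \<in> ?L" "b \<notin> ?L" "induced E (set \<tau>) a b"
    using escape[of _ "\<tau>!i" "\<tau>!Suc i" ?L] x0 y0 by blast
  obtain p where p: "p < Suc i" "\<tau>!p = a" using ab(1) i by (auto simp: in_set_conv_nth)
  obtain q where q: "q < length \<tau>" "\<tau>!q = b" using ab(3) unfolding induced_def by (auto simp: in_set_conv_nth)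
  have "q \<ge> Suc i"
  proof (rule ccontr)
    assume "\<not> q \<ge> Suc i"
    then have "b \<in> ?L" using q by (auto simp: in_set_conv_nth intro!: exI[of _ q])
    then show False using ab by simp
  qed
  have Epq: "E (\<tau>!p) (\<tau>!q)" using ab p q unfolding induced_def by simp
  have Eiq: "E (\<tau>!i) (\<tau>!q)"
  proof (cases "p = i")
    case True then show ?thesis using Epq by simp
  next
    case False
    then have "p < i" using p by simp
    moreover have "i < q" using \<open>q \<ge> Suc i\<close> by simp
    ultimately have "prec \<tau> (\<tau>!p) (\<tau>!i)" "prec \<tau> (\<tau>!i) (\<tau>!q)"
      using prec_nth[of p i \<tau>] prec_nth[of i q \<tau>] q by auto
    then show ?thesis using cp Epq unfolding CP_def by blast
  qed
  show ?thesis
  proof (cases "q = Suc i")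
    case True then show ?thesis using Eiq by simp
  next
    case False
    then have "Suc i < q" using \<open>q \<ge> Suc i\<close> by simp
    then have "prec \<tau> (\<tau>!i) (\<tau>!Suc i)" "prec \<tau> (\<tau>!Suc i) (\<tau>!q)"
      using prec_nth[of i "Suc i" \<tau>] prec_nth[of "Suc i" q \<tau>] q i by auto
    then show ?thesis using cp Eiq unfolding CP_def by blast
  qed
qed


lemma shortcut:
  assumes "(induced E (insert n S'))\<^sup>*\<^sup>* x y" "x \<in> S'" "n \<notin> S'"
    and cl: "\<And>a b. a \<in> S' \<Longrightarrow> b \<in> S' \<Longrightarrow> E a n \<Longrightarrow> E b n \<Longrightarrow> a \<noteq> b \<Longrightarrow> E a b"
    and sym: "\<And>a b. E a b \<Longrightarrow> E b a" and irr: "\<And>a. \<not> E a a"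
  shows "(y \<in> S' \<longrightarrow> (induced E S')\<^sup>*\<^sup>* x y) \<and> (y = n \<longrightarrow> (\<exists>z\<in>S'. (induced E S')\<^sup>*\<^sup>* x z \<and> E z n))"
  using assms(1)
proof (induction rule: rtranclp_induct)
  case base
  then show ?case using assms(2,3) by auto
next
  case (step y z)
  have yz: "y \<in> insert n S'" "z \<in> insert n S'" "E y z" using step(2) unfolding induced_def by auto
  show ?case
  proof (intro conjI impI)
    assume zS: "z \<in> S'"
    show "(induced E S')\<^sup>*\<^sup>* x z"
    proof (cases "y = n")
      case False
      then have "y \<in> S'" using yz by simp
      then have "induced E S' y z" using zS yz(3) unfolding induced_def by simp
      moreover have "(induced E S')\<^sup>*\<^sup>* x y" using step(3) \<open>y \<in> S'\<close> by simp
      ultimately show ?thesis by simp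
    next
      case True
      then obtain w where w: "w \<in> S'" "(induced E S')\<^sup>*\<^sup>* x w" "E w n" using step(3) by blast
      show ?thesis
      proof (cases "w = z")
        case True then show ?thesis using w by simp
      next
        case False
        have "E z n" using yz True sym by simp
        then have "E w z" using cl[of w z] w zS False by simp
        then have "induced E S' w z" using zS w unfolding induced_def by simp
        then show ?thesis using w by simp
      qed
    qed
  next
    assume zn: "z = n"
    then have "y \<noteq> n" using yz irr by auto
    then have "y \<in> S'" using yz by simp
    then show "\<exists>z\<in>S'. (induced E S')\<^sup>*\<^sup>* x z \<and> E z n" using step(3) yz zn by blast
  qed
qed

lemma CL_later: "CL E vs \<Longrightarrow> prec vs x y \<Longrightarrow> prec vs x z \<Longrightarrow> y \<noteq> z \<Longrightarrow> E x y \<Longrightarrow> E x z \<Longrightarrow> E y z"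
  unfolding CL_def by blast
lemma CL_earlier: "CL E vs \<Longrightarrow> prec vs y x \<Longrightarrow> prec vs z x \<Longrightarrow> y \<noteq> z \<Longrightarrow> E x y \<Longrightarrow> E x z \<Longrightarrow> E y z"
  unfolding CL_def by blast
lemma CL_mono:
  assumes "\<And>x y. prec xs x y \<Longrightarrow> prec ys x y" "CL E ys"
  shows "CL E xs"
  unfolding CL_def
proof (intro allI impI)
  fix x y z assume h: "prec xs x y \<and> prec xs x z \<or> prec xs y x \<and> prec xs z x" "y \<noteq> z" "E x y" "E x z"
  from h(1) show "E y z"
  proof
    assume "prec xs x y \<and> prec xs x z"
    then show ?thesis using CL_later[OF assms(2) _ _ h(2-4)] assms(1) by blast
  next
    assume "prec xs y x \<and> prec xs z x"
    then show ?thesis using CL_earlier[OF assms(2) _ _ h(2-4)] assms(1) by blast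
  qed
qed
lemma CL_snoc: "CL E (xs @ [n]) \<Longrightarrow> CL E xs"
  by (rule CL_mono[of xs "xs @ [n]"]) (auto simp: prec_append)

lemma CP_from_conn:
  assumes "distinct \<tau>" "CL E \<tau>" "conn E (set \<tau>)"
    and sym: "\<And>a b. E a b \<Longrightarrow> E b a" and irr: "\<And>a. \<not> E a a"
  shows "CP E \<tau>"
  using assms(1-3)
proof (induction \<tau> rule: rev_induct)
  case Nil
  then show ?case unfolding CP_def by simp
next
  case (snoc n \<tau>')
  have d: "distinct \<tau>'" "n \<notin> set \<tau>'" using snoc.prems(1) by auto
  have cl: "CL E \<tau>'" using CL_snoc[OF snoc.prems(2)] .
  have cln: "\<And>a b. a \<in> set \<tau>' \<Longrightarrow> b \<in> set \<tau>' \<Longrightarrow> E a n \<Longrightarrow> E b n \<Longrightarrow> a \<noteq> b \<Longrightarrow> E a b"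
  proof -
    fix a b assume h: "a \<in> set \<tau>'" "b \<in> set \<tau>'" "E a n" "E b n" "a \<noteq> b"
    have "prec (\<tau>' @ [n]) a n" "prec (\<tau>' @ [n]) b n" using h prec_append[of \<tau>' "[n]"] by auto
    then show "E a b" using CL_earlier[OF snoc.prems(2), of a n b] h sym by blast
  qed
  have cn: "conn E (set \<tau>')"
    unfolding conn_def
  proof (intro ballI)
    fix x y assume xy: "x \<in> set \<tau>'" "y \<in> set \<tau>'"
    have "(induced E (insert n (set \<tau>')))\<^sup>*\<^sup>* x y"
      using snoc.prems(3) xy unfolding conn_def by auto
    then show "(induced E (set \<tau>'))\<^sup>*\<^sup>* x y"
      using shortcut[of E n "set \<tau>'" x y] xy d cln sym irr by blast
  qed
  have cp: "CP E \<tau>'" using snoc.IH[OF d(1) cl cn] .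
  have pa: "\<And>x y. prec (\<tau>' @ [n]) x y \<longleftrightarrow> prec \<tau>' x y \<or> (x \<in> set \<tau>' \<and> y = n)"
    unfolding prec_append by simp
  show ?case unfolding CP_def
  proof (intro allI impI)
    fix x y z assume h: "prec (\<tau>' @ [n]) x y" "prec (\<tau>' @ [n]) y z" "E x z"
    show "E x y \<and> E y z"
    proof (cases "z = n")
      case False
      then have "prec \<tau>' y z" using h pa by blast
      moreover have "y \<noteq> n" using prec_set[OF \<open>prec \<tau>' y z\<close>] d(2) by blast
      ultimately have "prec \<tau>' x y" using h(1) pa by blast
      then show ?thesis using cp \<open>prec \<tau>' y z\<close> h unfolding CP_def by blast
    next
      case True
      have "prec \<tau>' y n \<or> y \<in> set \<tau>'" using h(2) True pa by simp
      then have yin: "y \<in> set \<tau>'" by (auto dest: prec_set)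
      have "prec \<tau>' x y \<or> (x \<in> set \<tau>' \<and> y = n)" using h(1) pa by simp
      then have xy: "prec \<tau>' x y" using yin d(2) by blast
      then obtain a b where ab: "a < b" "b < length \<tau>'" "\<tau>'!a = x" "\<tau>'!b = y"
        unfolding prec_def by blast
      have Exn: "E x n" using h(3) True by simp
      have all: "\<And>m. a \<le> m \<Longrightarrow> m < length \<tau>' \<Longrightarrow> E (\<tau>'!m) n"
      proof -
        fix m assume "a \<le> m" "m < length \<tau>'"
        then show "E (\<tau>'!m) n"
        proof (induction m)
          case 0
          then have "a = 0" by simp
          then show ?case using Exn ab(3) by simp
        next
          case (Suc m)
          show ?case
          proof (cases "a = Suc m")
            case True then show ?thesis using Exn ab(3) by simp
          next
            case False
            then have am: "a \<le> m" using Suc.prems(1) by simp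
            have e1: "E (\<tau>'!m) n" using Suc.IH am Suc.prems(2) by simp
            have e2: "E (\<tau>'!m) (\<tau>'!Suc m)" using chain[OF d(1) cp cn Suc.prems(2)] .
            have "prec \<tau>' (\<tau>'!m) (\<tau>'!Suc m)" using prec_nth[of m "Suc m" \<tau>'] Suc.prems(2) by simp
            then have p1: "prec (\<tau>' @ [n]) (\<tau>'!m) (\<tau>'!Suc m)" using pa by blast
            have "\<tau>'!m \<in> set \<tau>'" using Suc.prems(2) by simp
            then have p2: "prec (\<tau>' @ [n]) (\<tau>'!m) n" using pa by blast
            have ne: "\<tau>'!Suc m \<noteq> n" using d(2) Suc.prems(2) nth_mem by blast
            show ?thesis using CL_later[OF snoc.prems(2) p1 p2 ne e2 e1] .
          qed
        qed
      qed
      have Eyn: "E y n" using all[of b] ab(1,2,4) by simp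
      have "x \<noteq> y" using xy prec_irrefl[OF d(1)] by force
      moreover have "prec (\<tau>' @ [n]) x n" "prec (\<tau>' @ [n]) y n" using pa yin prec_set[OF xy] by simp_all
      ultimately have "E x y" using CL_earlier[OF snoc.prems(2), of x n y] sym[OF Exn] sym[OF Eyn] by blast
      then show ?thesis using Eyn True by simp
    qed
  qed
qed

lemma local_ok_none: "(\<And>y. \<not> prec vs x y) \<Longrightarrow> local_ok E vs x"
  unfolding local_ok_def by blast

lemma block_last:
  assumes d: "distinct \<tau>" and cl: "CL E \<tau>" and cp: "CP E \<tau>"
    and sym: "\<And>a b. E a b \<Longrightarrow> E b a" and irr: "\<And>a. \<not> E a a"
    and cin: "c \<in> set \<tau>"
    and simpl: "\<And>x y. x \<in> set \<tau> \<Longrightarrow> y \<in> set \<tau> \<Longrightarrow> E c x \<Longrightarrow> E c y \<Longrightarrow> x \<noteq> y \<Longrightarrow> E x y"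
  shows "\<exists>\<rho>'. distinct (\<rho>' @ [c]) \<and> set (\<rho>' @ [c]) = set \<tau> \<and> SE E (\<rho>' @ [c])"
proof -
  define PL where "PL x \<longleftrightarrow> prec \<tau> x c \<and> \<not> E x c" for x
  define PR where "PR x \<longleftrightarrow> prec \<tau> c x \<and> \<not> E x c" for x
  define PM1 where "PM1 x \<longleftrightarrow> prec \<tau> x c \<and> E x c" for x
  define PM2 where "PM2 x \<longleftrightarrow> prec \<tau> c x \<and> E x c" for x
  define \<rho> where "\<rho> = filter PL \<tau> @ rev (filter PR \<tau>) @ filter PM1 \<tau> @ rev (filter PM2 \<tau>) @ [c]"
  have trans: "\<And>a b e. prec \<tau> a b \<Longrightarrow> prec \<tau> b e \<Longrightarrow> prec \<tau> a e" using prec_trans[OF d] by blast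
  have asym: "\<And>a b. prec \<tau> a b \<Longrightarrow> \<not> prec \<tau> b a" using prec_asym[OF d] by blast
  have irrp: "\<And>a. \<not> prec \<tau> a a" using prec_irrefl[OF d] by blast
  have X1: "\<And>a b. prec \<tau> a c \<Longrightarrow> prec \<tau> c b \<Longrightarrow> E a b \<Longrightarrow> E a c \<and> E c b"
    using cp unfolding CP_def by blast
  have X2: "\<And>a b. prec \<tau> a b \<Longrightarrow> prec \<tau> b c \<Longrightarrow> E a c \<Longrightarrow> E b c"
    using cp unfolding CP_def by blast
  have X3: "\<And>a b. prec \<tau> c a \<Longrightarrow> prec \<tau> a b \<Longrightarrow> E c b \<Longrightarrow> E c a"
    using cp unfolding CP_def by blast
  have cls: "\<And>y. y \<in> set \<tau> \<Longrightarrow> y = c \<or> PL y \<or> PR y \<or> PM1 y \<or> PM2 y"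
    unfolding PL_def PR_def PM1_def PM2_def using prec_total cin by metis
  have PLs: "\<And>y. PL y \<Longrightarrow> y \<in> set \<tau>" and PRs: "\<And>y. PR y \<Longrightarrow> y \<in> set \<tau>"
    and PM1s: "\<And>y. PM1 y \<Longrightarrow> y \<in> set \<tau>" and PM2s: "\<And>y. PM2 y \<Longrightarrow> y \<in> set \<tau>"
    unfolding PL_def PR_def PM1_def PM2_def using prec_set by metis+
  have cn: "\<not> PL c" "\<not> PR c" "\<not> PM1 c" "\<not> PM2 c"
    unfolding PL_def PR_def PM1_def PM2_def using irrp by auto
  have nc: "\<And>y. PL y \<Longrightarrow> y \<noteq> c" "\<And>y. PR y \<Longrightarrow> y \<noteq> c" "\<And>y. PM1 y \<Longrightarrow> y \<noteq> c" "\<And>y. PM2 y \<Longrightarrow> y \<noteq> c"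
    using cn by auto
  have ex: "\<And>y. PL y \<Longrightarrow> \<not> PR y \<and> \<not> PM1 y \<and> \<not> PM2 y"
    "\<And>y. PR y \<Longrightarrow> \<not> PM1 y \<and> \<not> PM2 y" "\<And>y. PM1 y \<Longrightarrow> \<not> PM2 y"
    unfolding PL_def PR_def PM1_def PM2_def using asym by auto
  have setrho: "set \<rho> = set \<tau>"
    unfolding \<rho>_def using cls cin PLs PRs PM1s PM2s by auto
  have drho: "distinct \<rho>"
    unfolding \<rho>_def using d ex cn by auto
  have prho: "\<And>x y. prec \<rho> x y \<longleftrightarrow>
     (PL x \<and> PL y \<and> prec \<tau> x y) \<or> (PR x \<and> PR y \<and> prec \<tau> y x) \<or> (PM1 x \<and> PM1 y \<and> prec \<tau> x y)
     \<or> (PM2 x \<and> PM2 y \<and> prec \<tau> y x) \<or> (PL x \<and> (PR y \<or> PM1 y \<or> PM2 y \<or> y = c))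
     \<or> (PR x \<and> (PM1 y \<or> PM2 y \<or> y = c)) \<or> (PM1 x \<and> (PM2 y \<or> y = c)) \<or> (PM2 x \<and> y = c)"
  proof -
    have m: "\<And>x. x \<in> set (filter PL \<tau>) \<longleftrightarrow> PL x" "\<And>x. x \<in> set (filter PR \<tau>) \<longleftrightarrow> PR x"
      "\<And>x. x \<in> set (filter PM1 \<tau>) \<longleftrightarrow> PM1 x" "\<And>x. x \<in> set (filter PM2 \<tau>) \<longleftrightarrow> PM2 x"
      using PLs PRs PM1s PM2s by auto
    fix x y
    show "?thesis x y"
      unfolding \<rho>_def prec_append prec_rev prec_filter set_append set_rev
      by (simp only: m prec_single set_simps singleton_iff empty_iff simp_thms Un_iff insert_iff) blast
  qed
  have SEt: "SE E \<tau>" using CL_SE[OF cl d] sym by blast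
  have SErt: "SE E (rev \<tau>)" using CL_SE[of E "rev \<tau>"] cl d sym CL_rev by auto
  have "local_ok E \<rho> x" for x
  proof -
    consider "PL x" | "PR x" | "\<not> PL x \<and> \<not> PR x" by blast
    then show ?thesis
    proof cases
      case 1
      have pre: "prec \<rho> x y \<longleftrightarrow> (PL y \<and> prec \<tau> x y) \<or> PR y \<or> PM1 y \<or> PM2 y \<or> y = c" for y
        using prho[of x y] 1 ex(1)[OF 1] by blast
      have nb: "\<And>y. E x y \<Longrightarrow> y \<in> set \<tau> \<Longrightarrow> prec \<tau> y c"
      proof -
        fix y assume "E x y" "y \<in> set \<tau>"
        have "y \<noteq> c"
        proof
          assume "y = c" then show False using 1 \<open>E x y\<close> unfolding PL_def by simp
        qed
        moreover have "\<not> prec \<tau> c y" using X1 1 \<open>E x y\<close> unfolding PL_def by blast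
        ultimately show "prec \<tau> y c" using prec_total[OF \<open>y \<in> set \<tau>\<close> cin] by blast
      qed
      have LM1: "\<And>k l. PL k \<Longrightarrow> PM1 l \<Longrightarrow> prec \<tau> k l"
      proof -
        fix k l assume "PL k" "PM1 l"
        have "k \<noteq> l"
        proof
          assume "k = l" then show False using \<open>PL k\<close> \<open>PM1 l\<close> ex(1) by simp
        qed
        moreover have "\<not> prec \<tau> l k"
        proof
          assume "prec \<tau> l k"
          moreover have "prec \<tau> k c" "\<not> E k c" using \<open>PL k\<close> unfolding PL_def by auto
          moreover have "E l c" using \<open>PM1 l\<close> unfolding PM1_def by auto
          ultimately show False using X2[of l k] by blast
        qed
        ultimately show "prec \<tau> k l" using prec_total[of k \<tau> l] PLs[OF \<open>PL k\<close>] PM1s[OF \<open>PM1 l\<close>] by blast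
      qed
      have xc: "prec \<tau> x c" using 1 unfolding PL_def by simp
      have LorM1: "PL y \<or> PM1 y" if "E x y" "prec \<rho> x y" for y
      proof -
        have ys: "y \<in> set \<tau>" using prec_set[OF \<open>prec \<rho> x y\<close>] setrho by blast
        then have yc: "prec \<tau> y c" using nb \<open>E x y\<close> by blast
        then show "PL y \<or> PM1 y" unfolding PL_def PM1_def by blast
      qed
      have i: "prec \<tau> x y" if "E x y" "prec \<rho> x y" for y
      proof -
        have "PL y \<or> PM1 y" using LorM1 that by blast
        then show "prec \<tau> x y"
        proof
          assume "PL y" then show ?thesis using pre[of y] \<open>prec \<rho> x y\<close> ex(1)[OF \<open>PL y\<close>] nc(1)[OF \<open>PL y\<close>] by blast
        next
          assume "PM1 y" then show ?thesis using LM1 1 by blast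
        qed
      qed
      show ?thesis
      proof (rule local_ok_transfer[of E \<tau> x \<rho>])
        show "local_ok E \<tau> x" using SEt unfolding SE_def by blast
        show "\<And>y. E x y \<Longrightarrow> prec \<rho> x y \<Longrightarrow> prec \<tau> x y" by (rule i)
        show "distinct \<rho>" by (rule drho)
      next
        fix k l assume h: "E x k" "E x l" "prec \<rho> x k" "prec \<rho> x l" "prec \<rho> k l"
        have k: "PL k \<or> PM1 k" using LorM1 h by blast
        have l: "PL l \<or> PM1 l" using LorM1 h by blast
        show "prec \<tau> k l"
        proof (cases "PL l")
          case True
          have "\<not> PR l" "\<not> PM1 l" "\<not> PM2 l" "l \<noteq> c" using ex(1)[OF True] nc(1)[OF True] by auto
          moreover have "\<not> PM1 k \<or> \<not> PL k" using ex(1) by blast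
          ultimately show ?thesis using prho[of k l] h(5) k by blast
        next
          case False
          then have "PM1 l" using l by blast
          then have "\<not> PL l" "\<not> PR l" "\<not> PM2 l" "l \<noteq> c" using ex nc(3)[OF \<open>PM1 l\<close>] by blast+
          show ?thesis using k
          proof
            assume "PL k" then show ?thesis using LM1 \<open>PM1 l\<close> by blast
          next
            assume "PM1 k"
            then have "\<not> PL k" "\<not> PR k" "\<not> PM2 k" using ex by blast+
            then show ?thesis using prho[of k l] h(5) \<open>PM1 k\<close> \<open>PM1 l\<close> \<open>\<not> PM2 l\<close> \<open>l \<noteq> c\<close> by blast
          qed
        qed
      next
        fix k j l assume h: "E x k" "E x l" "prec \<rho> x k" "prec \<rho> k l" "E k j" "prec \<rho> x j"
        have "PL k \<or> PM1 k" using LorM1 h by blast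
        then have kc: "prec \<tau> k c" unfolding PL_def PM1_def by blast
        have "PL j \<and> prec \<tau> x j \<or> PR j \<or> PM1 j \<or> PM2 j \<or> j = c" using h(6) pre[of j] by blast
        then show "prec \<tau> x j"
        proof (elim disjE)
          assume "PR j"
          then have "prec \<tau> c j" "\<not> E j c" unfolding PR_def by auto
          then have "E c j" using X1[of k j] kc h(5) by blast
          then show ?thesis using \<open>\<not> E j c\<close> sym by blast
        next
          assume "PM1 j" then show ?thesis using LM1 1 by blast
        next
          assume "PM2 j" then have "prec \<tau> c j" unfolding PM2_def by simp
          then show ?thesis using trans xc by blast
        next
          assume "j = c" then show ?thesis using xc by simp
        qed simp
      qed
    next
      case 2
      have pre: "prec \<rho> x y \<longleftrightarrow> (PR y \<and> prec \<tau> y x) \<or> PM1 y \<or> PM2 y \<or> y = c" for y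
        using prho[of x y] 2 ex(1) ex(2)[OF 2] by blast
      have xc: "prec \<tau> c x" and nxc: "\<not> E c x" using 2 sym unfolding PR_def by blast+
      have nb: "\<And>y. E x y \<Longrightarrow> y \<in> set \<tau> \<Longrightarrow> prec \<tau> c y"
      proof -
        fix y assume "E x y" "y \<in> set \<tau>"
        have "y \<noteq> c"
        proof
          assume "y = c" then show False using 2 \<open>E x y\<close> unfolding PR_def by simp
        qed
        moreover have "\<not> prec \<tau> y c"
        proof
          assume "prec \<tau> y c"
          moreover have "E y x" using \<open>E x y\<close> sym by blast
          ultimately have "E c x" using X1[of y x] xc by blast
          then show False using nxc by blast
        qed
        ultimately show "prec \<tau> c y" using prec_total[OF \<open>y \<in> set \<tau>\<close> cin] by blast
      qed
      have RM2: "\<And>k l. PR k \<Longrightarrow> PM2 l \<Longrightarrow> prec \<tau> l k"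
      proof -
        fix k l assume "PR k" "PM2 l"
        have "k \<noteq> l"
        proof
          assume "k = l" then show False using \<open>PR k\<close> \<open>PM2 l\<close> ex(2) by simp
        qed
        moreover have "\<not> prec \<tau> k l"
        proof
          assume "prec \<tau> k l"
          moreover have "prec \<tau> c k" "\<not> E c k" using \<open>PR k\<close> sym unfolding PR_def by auto
          moreover have "E c l" using \<open>PM2 l\<close> sym unfolding PM2_def by auto
          ultimately show False using X3[of k l] by blast
        qed
        ultimately show "prec \<tau> l k" using prec_total[of k \<tau> l] PRs[OF \<open>PR k\<close>] PM2s[OF \<open>PM2 l\<close>] by blast
      qed
      have RorM2: "PR y \<or> PM2 y" if "E x y" "prec \<rho> x y" for y
      proof -
        have ys: "y \<in> set \<tau>" using prec_set[OF \<open>prec \<rho> x y\<close>] setrho by blast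
        then have yc: "prec \<tau> c y" using nb \<open>E x y\<close> by blast
        then show "PR y \<or> PM2 y" unfolding PR_def PM2_def by blast
      qed
      show ?thesis
      proof (rule local_ok_transfer[of E "rev \<tau>" x \<rho>])
        show "local_ok E (rev \<tau>) x" using SErt unfolding SE_def by blast
        show "distinct \<rho>" by (rule drho)
      next
        fix y assume "E x y" "prec \<rho> x y"
        then have "PR y \<or> PM2 y" using RorM2 by blast
        then show "prec (rev \<tau>) x y" unfolding prec_rev
        proof
          assume "PR y" then show "prec \<tau> y x"
            using pre[of y] \<open>prec \<rho> x y\<close> ex(2)[OF \<open>PR y\<close>] nc(2)[OF \<open>PR y\<close>] by blast
        next
          assume "PM2 y" then show "prec \<tau> y x" using RM2 2 by blast
        qed
      next
        fix k l assume h: "E x k" "E x l" "prec \<rho> x k" "prec \<rho> x l" "prec \<rho> k l"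
        have k: "PR k \<or> PM2 k" using RorM2 h by blast
        have l: "PR l \<or> PM2 l" using RorM2 h by blast
        show "prec (rev \<tau>) k l" unfolding prec_rev
        proof (cases "PR l")
          case True
          have "\<not> PL l" "\<not> PM1 l" "\<not> PM2 l" "l \<noteq> c" using ex(1)[of l] ex(2)[OF True] nc(2)[OF True] True by auto
          moreover have "\<not> PM2 k \<or> \<not> PR k" using ex(2) by blast
          moreover have "\<not> PL k" using k ex(1) by blast
          ultimately show "prec \<tau> l k" using prho[of k l] h(5) k by blast
        next
          case False
          then have "PM2 l" using l by blast
          then have "\<not> PL l" "\<not> PR l" "\<not> PM1 l" "l \<noteq> c"
            using ex(1)[of l] ex(2)[of l] ex(3)[of l] nc(4)[OF \<open>PM2 l\<close>] by auto
          show "prec \<tau> l k" using k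
          proof
            assume "PR k" then show ?thesis using RM2 \<open>PM2 l\<close> by blast
          next
            assume "PM2 k"
            then have "\<not> PL k" "\<not> PR k" "\<not> PM1 k" using ex(1)[of k] ex(2)[of k] ex(3)[of k] by auto
            then show ?thesis using prho[of k l] h(5) \<open>PM2 k\<close> \<open>PM2 l\<close> \<open>l \<noteq> c\<close> by blast
          qed
        qed
      next
        fix k j l assume h: "E x k" "E x l" "prec \<rho> x k" "prec \<rho> k l" "E k j" "prec \<rho> x j"
        have "PR j \<and> prec \<tau> j x \<or> PM1 j \<or> PM2 j \<or> j = c" using h(6) pre[of j] by blast
        then show "prec (rev \<tau>) x j" unfolding prec_rev
        proof (elim disjE)
          assume "PM1 j" then have "prec \<tau> j c" unfolding PM1_def by simp
          then show "prec \<tau> j x" using trans xc by blast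
        next
          assume "PM2 j" then show "prec \<tau> j x" using RM2 2 by blast
        next
          assume "j = c" then show "prec \<tau> j x" using xc by simp
        qed simp
      qed
    next
      case 3
      have later: "prec \<rho> x y \<Longrightarrow> PM1 y \<or> PM2 y \<or> y = c" for y
        using prho[of x y] 3 by blast
      have N: "\<And>y. PM1 y \<or> PM2 y \<or> y = c \<Longrightarrow> y \<in> set \<tau> \<and> (y = c \<or> E c y)"
        using PM1s PM2s cin sym unfolding PM1_def PM2_def by blast
      show ?thesis
      proof (rule local_ok_clique[OF _ drho])
        fix y z assume "prec \<rho> x y" "prec \<rho> x z" "y \<noteq> z"
        then have "y \<in> set \<tau> \<and> (y = c \<or> E c y)" "z \<in> set \<tau> \<and> (z = c \<or> E c z)"
          using later N by blast+
        then show "E y z" using simpl \<open>y \<noteq> z\<close> sym by blast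
      qed
    qed
  qed
  then have "SE E \<rho>" unfolding SE_def by blast
  then show ?thesis using drho setrho unfolding \<rho>_def
    by (intro exI[of _ "filter PL \<tau> @ rev (filter PR \<tau>) @ filter PM1 \<tau> @ rev (filter PM2 \<tau>)"]) simp
qed

lemma merge:
  assumes d: "distinct (ys @ zs)" and us: "set us \<subseteq> set zs" "length us \<le> 1"
    and cross: "\<And>a b. a \<in> set ys \<Longrightarrow> b \<in> set zs \<Longrightarrow> E a b \<Longrightarrow> b \<in> set us"
    and s1: "SE E (ys @ us)" and s2: "SE E zs"
  shows "SE E (ys @ zs)"
  unfolding SE_def
proof
  fix x
  have dz: "distinct zs" and dy: "distinct ys" and dis: "set ys \<inter> set zs = {}" using d by auto
  have uu: "\<And>k l. k \<in> set us \<Longrightarrow> l \<in> set us \<Longrightarrow> k = l"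
  proof -
    fix k l assume "k \<in> set us" "l \<in> set us"
    then show "k = l" using us(2) by (cases us) auto
  qed
  have pw: "\<And>a b. prec (ys @ zs) a b \<longleftrightarrow> prec ys a b \<or> prec zs a b \<or> (a \<in> set ys \<and> b \<in> set zs)"
    by (rule prec_append)
  have pv: "\<And>a b. prec (ys @ us) a b \<longleftrightarrow> prec ys a b \<or> prec us a b \<or> (a \<in> set ys \<and> b \<in> set us)"
    by (rule prec_append)
  show "local_ok E (ys @ zs) x"
  proof (cases "x \<in> set ys")
    case True
    have xnz: "x \<notin> set zs" using True dis by blast
    have nb: "\<And>y. E x y \<Longrightarrow> prec (ys @ zs) x y \<Longrightarrow> prec ys x y \<or> y \<in> set us"
    proof -
      fix y assume "E x y" "prec (ys @ zs) x y"
      then have "prec ys x y \<or> prec zs x y \<or> y \<in> set zs" using pw by blast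
      then show "prec ys x y \<or> y \<in> set us"
      proof (elim disjE)
        assume "prec zs x y" then show ?thesis using prec_set xnz by metis
      next
        assume "y \<in> set zs" then show ?thesis using cross True \<open>E x y\<close> by blast
      qed simp
    qed
    show ?thesis
    proof (rule local_ok_transfer[of E "ys @ us" x "ys @ zs"])
      show "local_ok E (ys @ us) x" using s1 unfolding SE_def by blast
      show "distinct (ys @ zs)" by (rule d)
    next
      fix y assume "E x y" "prec (ys @ zs) x y"
      then show "prec (ys @ us) x y" using nb pv True by blast
    next
      fix k l assume h: "E x k" "E x l" "prec (ys @ zs) x k" "prec (ys @ zs) x l" "prec (ys @ zs) k l"
      have k: "prec ys x k \<or> k \<in> set us" and l: "prec ys x l \<or> l \<in> set us" using nb h by blast+
      from h(5) have "prec ys k l \<or> prec zs k l \<or> (k \<in> set ys \<and> l \<in> set zs)" using pw by blast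
      then show "prec (ys @ us) k l"
      proof (elim disjE)
        assume "prec ys k l" then show ?thesis using pv by blast
      next
        assume a: "prec zs k l"
        then have "k \<in> set zs" "l \<in> set zs" using prec_set by metis+
        then have "k \<notin> set ys" "l \<notin> set ys" using dis by blast+
        then have "k \<in> set us" "l \<in> set us" using k l prec_set by metis+
        then have "k = l" using uu by blast
        then show ?thesis using a prec_irrefl[OF dz] by simp
      next
        assume "k \<in> set ys \<and> l \<in> set zs"
        then have "l \<notin> set ys" using dis by blast
        then have "l \<in> set us" using l prec_set by metis
        then show ?thesis using pv \<open>k \<in> set ys \<and> l \<in> set zs\<close> by blast
      qed
    next
      fix k j l assume h: "E x k" "E x l" "prec (ys @ zs) x k" "prec (ys @ zs) k l" "E k j" "prec (ys @ zs) x j"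
      have k: "prec ys x k \<or> k \<in> set us" and l: "prec ys x l \<or> l \<in> set us"
      proof -
        show "prec ys x k \<or> k \<in> set us" using nb h by blast
        have "prec (ys @ zs) x l" using h(3,4) prec_trans d by metis
        then show "prec ys x l \<or> l \<in> set us" using nb h by blast
      qed
      have "prec ys x j \<or> prec zs x j \<or> j \<in> set zs" using h(6) pw by blast
      then show "prec (ys @ us) x j"
      proof (elim disjE)
        assume "prec ys x j" then show ?thesis using pv by blast
      next
        assume "prec zs x j" then show ?thesis using prec_set xnz by metis
      next
        assume jz: "j \<in> set zs"
        show ?thesis
        proof (cases "k \<in> set ys")
          case True
          then have "j \<in> set us" using cross jz h(5) by blast
          then show ?thesis using pv \<open>x \<in> set ys\<close> by blast
        next
          case False
          then have ku: "k \<in> set us" using k prec_set by metis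
          then have kz: "k \<in> set zs" using us by blast
          have "prec zs k l \<or> (k \<in> set ys \<and> l \<in> set zs) \<or> prec ys k l" using h(4) pw by blast
          then have "prec zs k l" using False prec_set by metis
          then have lz: "l \<in> set zs" using prec_set by metis
          then have "l \<notin> set ys" using dis by blast
          then have "l \<in> set us" using l prec_set by metis
          then have "k = l" using uu ku by blast
          then show ?thesis using \<open>prec zs k l\<close> prec_irrefl[OF dz] by simp
        qed
      qed
    qed
  next
    case False
    have eq: "\<And>y. prec (ys @ zs) x y \<longleftrightarrow> prec zs x y"
      using pw False prec_set by metis
    show ?thesis
    proof (rule local_ok_transfer[of E zs x "ys @ zs"])
      show "local_ok E zs x" using s2 unfolding SE_def by blast
      show "distinct (ys @ zs)" by (rule d)
    next
      fix y assume "prec (ys @ zs) x y" then show "prec zs x y" using eq by blast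
    next
      fix k l assume h: "prec (ys @ zs) x k" "prec (ys @ zs) k l"
      then have "k \<in> set zs" using eq prec_set by metis
      then have "k \<notin> set ys" using dis by blast
      then show "prec zs k l" using h(2) pw prec_set by metis
    next
      fix j assume "prec (ys @ zs) x j" then show "prec zs x j" using eq by blast
    qed
  qed
qed

lemma glue_disj:
  assumes "distinct ys" "distinct zs" "set ys \<inter> set zs = {}"
    and "\<And>a b. a \<in> set ys \<Longrightarrow> b \<in> set zs \<Longrightarrow> \<not> E a b"
    and "SE E ys" "SE E zs"
  shows "SE E (ys @ zs)"
  using merge[of ys zs "[]" E] assms by auto

lemma glue_cut:
  assumes "distinct (ys @ [v])" "distinct zs" "v \<in> set zs" "set ys \<inter> set zs = {}"
    and "\<And>a b. a \<in> set ys \<Longrightarrow> b \<in> set zs \<Longrightarrow> E a b \<Longrightarrow> b = v"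
    and "SE E (ys @ [v])" "SE E zs"
  shows "SE E (ys @ zs)"
  using merge[of ys zs "[v]" E] assms by auto

lemma pair_nonsep:
  assumes "E v w" "E w v" "v \<noteq> w"
  shows "nonseparable_on E {v, w}"
  unfolding nonseparable_on_def connected_on_def
proof (intro conjI ballI allI)
  show "{v, w} \<noteq> {}" by simp
next
  fix x y assume "x \<in> {v, w}" "y \<in> {v, w}"
  moreover have "induced E {v,w} v w" "induced E {v,w} w v" using assms unfolding induced_def by auto
  ultimately show "joined_in E {v, w} x y" unfolding joined_in_def by auto
next
  fix u show "\<not> cut_vertex_on E {v, w} u"
  proof
    assume "cut_vertex_on E {v, w} u"
    then obtain x y where h: "u \<in> {v,w}" "joined_in E {v,w} x y" "x \<noteq> u" "y \<noteq> u"
      "\<not> joined_in E ({v,w} - {u}) x y" unfolding cut_vertex_on_def by blast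
    have "x \<in> {v,w}" "y \<in> {v,w}" using h(2) unfolding joined_in_def by auto
    then have "x = y" "x \<in> {v,w} - {u}" using h(1,3,4) by auto
    then have "joined_in E ({v,w} - {u}) x y" unfolding joined_in_def by simp
    then show False using h(5) by blast
  qed
qed

lemma separation:
  assumes ne: "V \<noteq> {}" and ns: "\<not> nonseparable_on E V" and sym: "\<And>a b. E a b \<Longrightarrow> E b a"
  shows "(\<exists>V1 V2. V1 \<union> V2 = V \<and> V1 \<inter> V2 = {} \<and> V1 \<noteq> {} \<and> V2 \<noteq> {} \<and> (\<forall>a\<in>V1. \<forall>b\<in>V2. \<not> E a b))
     \<or> (\<exists>V1 V2 v. V1 \<union> V2 = V \<and> V1 \<inter> V2 = {v} \<and> (\<exists>a\<in>V1. a \<noteq> v \<and> E v a) \<and> (\<exists>b\<in>V2. b \<noteq> v \<and> E v b)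
          \<and> (\<forall>a\<in>V1-{v}. \<forall>b\<in>V2-{v}. \<not> E a b))"
proof -
  have comp: "\<And>W x a b. a \<in> {z \<in> W. (induced E W)\<^sup>*\<^sup>* x z} \<Longrightarrow> b \<in> W \<Longrightarrow> E a b
      \<Longrightarrow> b \<in> {z \<in> W. (induced E W)\<^sup>*\<^sup>* x z}"
  proof -
    fix W x a b assume "a \<in> {z \<in> W. (induced E W)\<^sup>*\<^sup>* x z}" "b \<in> W" "E a b"
    then have "(induced E W)\<^sup>*\<^sup>* x a" "induced E W a b" unfolding induced_def by auto
    then show "b \<in> {z \<in> W. (induced E W)\<^sup>*\<^sup>* x z}" using \<open>b \<in> W\<close> by auto
  qed
  from ns consider "\<not> connected_on E V" | v where "cut_vertex_on E V v"
    unfolding nonseparable_on_def by blast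
  then show ?thesis
  proof cases
    case 1
    then obtain x y where xy: "x \<in> V" "y \<in> V" "\<not> joined_in E V x y"
      using ne unfolding connected_on_def by blast
    define C where "C = {z \<in> V. (induced E V)\<^sup>*\<^sup>* x z}"
    have "x \<in> C" using xy unfolding C_def by simp
    moreover have "y \<in> V - C" using xy unfolding C_def joined_in_def by simp
    moreover have "\<forall>a\<in>C. \<forall>b\<in>V - C. \<not> E a b" using comp unfolding C_def by blast
    moreover have "C \<union> (V - C) = V" "C \<inter> (V - C) = {}" unfolding C_def by auto
    moreover note F = calculation
    show ?thesis
      apply (rule disjI1)
      apply (rule exI[of _ C])
      apply (rule exI[of _ "V - C"])
      using F by auto
  next
    case 2
    then obtain x y where h: "v \<in> V" "joined_in E V x y" "x \<noteq> v" "y \<noteq> v"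
      "\<not> joined_in E (V - {v}) x y" unfolding cut_vertex_on_def by blast
    define W where "W = V - {v}"
    define C where "C = {z \<in> W. (induced E W)\<^sup>*\<^sup>* x z}"
    have xv: "x \<in> V" "y \<in> V" using h(2) unfolding joined_in_def by auto
    have xC: "x \<in> C" using xv h(3) unfolding C_def W_def by simp
    have yC: "y \<in> W - C" using xv h(3,4,5) unfolding C_def W_def joined_in_def by simp
    have CW: "C \<subseteq> W" unfolding C_def by auto
    have vW: "v \<notin> W" unfolding W_def by simp
    have nc: "\<forall>a\<in>C. \<forall>b\<in>W - C. \<not> E a b" using comp unfolding C_def by blast
    show ?thesis
    proof (cases "(\<exists>a\<in>C. E v a) \<and> (\<exists>b\<in>W - C. E v b)")
      case True
      then obtain a b where ab: "a \<in> C" "E v a" "b \<in> W - C" "E v b" by blast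
      have "(C \<union> {v}) \<union> ((W - C) \<union> {v}) = V" using CW h(1) unfolding W_def by auto
      moreover have "(C \<union> {v}) \<inter> ((W - C) \<union> {v}) = {v}" by auto
      moreover have "\<exists>a\<in>C \<union> {v}. a \<noteq> v \<and> E v a" using ab CW vW by (intro bexI[of _ a]) auto
      moreover have "\<exists>b\<in>(W - C) \<union> {v}. b \<noteq> v \<and> E v b" using ab vW by (intro bexI[of _ b]) auto
      moreover have "\<forall>a\<in>(C \<union> {v}) - {v}. \<forall>b\<in>((W - C) \<union> {v}) - {v}. \<not> E a b" using nc by auto
      moreover note F = calculation
      show ?thesis
        apply (rule disjI2)
        apply (rule exI[of _ "C \<union> {v}"])
        apply (rule exI[of _ "(W - C) \<union> {v}"])
        apply (rule exI[of _ v])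
        using F h(1) by auto
    next
      case False
      then show ?thesis
      proof (cases "\<exists>a\<in>C. E v a")
        case True
        then have nb: "\<forall>b\<in>W - C. \<not> E v b" using False by blast
        have "(C \<union> {v}) \<union> (W - C) = V" using CW h(1) unfolding W_def by auto
        moreover have "(C \<union> {v}) \<inter> (W - C) = {}" using vW by auto
        moreover have "\<forall>a\<in>C \<union> {v}. \<forall>b\<in>W - C. \<not> E a b" using nc nb by blast
        moreover have "W - C \<noteq> {}" using yC by blast
        moreover note F = calculation
        show ?thesis
          apply (rule disjI1)
          apply (rule exI[of _ "C \<union> {v}"])
          apply (rule exI[of _ "W - C"])
          using F h(1) by auto
      next
        case False
        then have nb: "\<forall>a\<in>C. \<not> E a v" using sym by blast
        have "C \<union> ((W - C) \<union> {v}) = V" using CW h(1) unfolding W_def by auto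
        moreover have "C \<inter> ((W - C) \<union> {v}) = {}" using vW CW by auto
        moreover have "\<forall>a\<in>C. \<forall>b\<in>(W - C) \<union> {v}. \<not> E a b" using nc nb by blast
        moreover have "C \<noteq> {}" using xC by blast
        moreover note F = calculation
        show ?thesis
          apply (rule disjI1)
          apply (rule exI[of _ C])
          apply (rule exI[of _ "(W - C) \<union> {v}"])
          using F h(1) by auto
      qed
    qed
  qed
qed

lemma block_transfer:
  assumes blk: "is_block V1 E B" and un: "V1 \<union> V2 = V" and it: "V1 \<inter> V2 \<subseteq> {v}"
    and nocross: "\<And>a b. a \<in> V1 - V2 \<Longrightarrow> b \<in> V2 - V1 \<Longrightarrow> \<not> E a b"
    and nbr: "v \<in> V1 \<inter> V2 \<Longrightarrow> \<exists>w\<in>V1. w \<noteq> v \<and> E v w"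
    and sym: "\<And>a b. E a b \<Longrightarrow> E b a"
  shows "is_block V E B"
proof -
  have BV1: "B \<subseteq> V1" and nsB: "nonseparable_on E B"
    and maxB: "\<And>B'. B \<subset> B' \<Longrightarrow> B' \<subseteq> V1 \<Longrightarrow> \<not> nonseparable_on E B'"
    using blk unfolding is_block_def by blast+
  have Bne: "B \<noteq> {}" using nsB unfolding nonseparable_on_def connected_on_def by blast
  have "\<not> nonseparable_on E B'" if h: "B \<subset> B'" "B' \<subseteq> V" for B'
  proof
    assume nsB': "nonseparable_on E B'"
    show False
    proof (cases "B' \<subseteq> V1")
      case True then show False using maxB h nsB' by blast
    next
      case False
      then obtain y where y: "y \<in> B'" "y \<notin> V1" by blast
      then have yV2: "y \<in> V2 - V1" using h un by blast
      show False
      proof (cases "\<exists>b\<in>B. b \<notin> V2")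
        case True
        then obtain b where b: "b \<in> B" "b \<notin> V2" by blast
        then have bV: "b \<in> V1 - V2" "b \<in> B'" using BV1 h by blast+
        define S where "S = B' - (V1 \<inter> V2)"
        have nj: "\<not> (induced E S)\<^sup>*\<^sup>* b y"
        proof
          assume "(induced E S)\<^sup>*\<^sup>* b y"
          moreover have "\<And>a z. a \<in> V1 - V2 \<Longrightarrow> induced E S a z \<Longrightarrow> z \<in> V1 - V2"
          proof -
            fix a z assume "a \<in> V1 - V2" "induced E S a z"
            then have "z \<in> S" "E a z" unfolding induced_def by auto
            then have "z \<in> V" "z \<notin> V1 \<inter> V2" using h unfolding S_def by auto
            moreover have "z \<notin> V2 - V1" using nocross \<open>a \<in> V1 - V2\<close> \<open>E a z\<close> by blast
            ultimately show "z \<in> V1 - V2" using un by blast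
          qed
          ultimately have "y \<in> V1 - V2" using stay[of "induced E S" b y "V1 - V2"] bV by blast
          then show False using yV2 by blast
        qed
        have jB': "joined_in E B' b y" using nsB' bV y unfolding nonseparable_on_def connected_on_def by blast
        show False
        proof (cases "v \<in> B' \<and> v \<in> V1 \<inter> V2")
          case True
          then have "S = B' - {v}" using it unfolding S_def by auto
          then have nj': "\<not> joined_in E (B' - {v}) b y" using nj unfolding joined_in_def by simp
          have "b \<noteq> v" using bV True by blast
          moreover have "y \<noteq> v" using yV2 True by blast
          ultimately have "cut_vertex_on E B' v"
            unfolding cut_vertex_on_def using True jB' nj' by blast
          then show False using nsB' unfolding nonseparable_on_def by blast
        next
          case False
          then have "S = B'" using it unfolding S_def by auto
          then show False using jB' nj unfolding joined_in_def by simp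
        qed
      next
        case False
        then have "B \<subseteq> V1 \<inter> V2" using BV1 by blast
        moreover have "B \<subseteq> {v}" using \<open>B \<subseteq> V1 \<inter> V2\<close> it by blast
        ultimately have Bv: "B = {v}" "v \<in> V1 \<inter> V2" using Bne by auto
        then obtain w where w: "w \<in> V1" "w \<noteq> v" "E v w" using nbr by blast
        have "nonseparable_on E {v, w}" using pair_nonsep[of E v w] w sym by blast
        moreover have "B \<subset> {v, w}" using Bv w by auto
        moreover have "{v, w} \<subseteq> V1" using Bv w by auto
        ultimately show False using maxB by blast
      qed
    qed
  qed
  moreover have "B \<subseteq> V" using BV1 un by blast
  ultimately show ?thesis using nsB unfolding is_block_def by blast
qed

definition simpl :: "('a \<Rightarrow> 'a \<Rightarrow> bool) \<Rightarrow> 'a set \<Rightarrow> 'a \<Rightarrow> bool" where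
  "simpl E V c \<longleftrightarrow> (\<forall>x y. x \<in> V \<longrightarrow> y \<in> V \<longrightarrow> E c x \<longrightarrow> E c y \<longrightarrow> x \<noteq> y \<longrightarrow> E x y)"

definition Q :: "('a \<Rightarrow> 'a \<Rightarrow> bool) \<Rightarrow> 'a set \<Rightarrow> bool" where
  "Q E V \<longleftrightarrow> (\<exists>vs. distinct vs \<and> set vs = V \<and> SE E vs) \<and>
     (\<forall>c\<in>V. simpl E V c \<longrightarrow> (\<exists>vs. distinct (vs @ [c]) \<and> set (vs @ [c]) = V \<and> SE E (vs @ [c])))"

lemma Q_ex: "Q E V \<Longrightarrow> \<exists>vs. distinct vs \<and> set vs = V \<and> SE E vs"
  unfolding Q_def by blast

lemma Q_last: "Q E V \<Longrightarrow> c \<in> V \<Longrightarrow> simpl E V c \<Longrightarrow> \<exists>vs. distinct (vs @ [c]) \<and> set (vs @ [c]) = V \<and> SE E (vs @ [c])"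
  unfolding Q_def by blast

lemma Q_intro: "(\<exists>vs. distinct vs \<and> set vs = V \<and> SE E vs) \<Longrightarrow>
  (\<And>c. c \<in> V \<Longrightarrow> simpl E V c \<Longrightarrow> \<exists>vs. distinct (vs @ [c]) \<and> set (vs @ [c]) = V \<and> SE E (vs @ [c]))
  \<Longrightarrow> Q E V"
  unfolding Q_def by blast

lemma simpl_sub: "simpl E V c \<Longrightarrow> V1 \<subseteq> V \<Longrightarrow> simpl E V1 c"
  unfolding simpl_def by blast

lemma claw_sub: "claw_free V E \<Longrightarrow> V1 \<subseteq> V \<Longrightarrow> claw_free V1 E"
  unfolding claw_free_def by blast

lemma claw_simpl:
  assumes cf: "claw_free V E" and "V1 \<subseteq> V" "v \<in> V1" "b \<in> V" "b \<notin> V1" "E v b"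
    and nb: "\<And>x. x \<in> V1 \<Longrightarrow> x \<noteq> v \<Longrightarrow> \<not> E x b" and irr: "\<And>a. \<not> E a a"
  shows "simpl E V1 v"
  unfolding simpl_def
proof (intro allI impI)
  fix x y assume h: "x \<in> V1" "y \<in> V1" "E v x" "E v y" "x \<noteq> y"
  show "E x y"
  proof (rule ccontr)
    assume nxy: "\<not> E x y"
    have "x \<noteq> v" "y \<noteq> v" using h irr by metis+
    then have "\<not> E x b" "\<not> E y b" using nb h by blast+
    moreover have "distinct [v, x, y, b]" using h \<open>x \<noteq> v\<close> \<open>y \<noteq> v\<close> assms(3,5) by auto
    moreover have "v \<in> V" "x \<in> V" "y \<in> V" using h assms(2,3) by blast+
    ultimately show False using cf nxy h assms(4,6) unfolding claw_free_def by blast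
  qed
qed

lemma SE_Nil: "SE E []"
  unfolding SE_def by (intro allI local_ok_none) simp

lemma disj_half:
  assumes "V1 \<union> V2 = V" "V1 \<inter> V2 = {}" "\<And>a b. a \<in> V2 \<Longrightarrow> b \<in> V1 \<Longrightarrow> \<not> E a b"
    and "distinct ys" "set ys = V2" "SE E ys" "distinct zs" "set zs = V1" "SE E zs"
  shows "distinct (ys @ zs) \<and> set (ys @ zs) = V \<and> SE E (ys @ zs)"
  using glue_disj[of ys zs E] assms by auto

lemma cut_half:
  assumes "V1 \<union> V2 = V" "V1 \<inter> V2 = {v}" "\<And>a b. a \<in> V2 - {v} \<Longrightarrow> b \<in> V1 - {v} \<Longrightarrow> \<not> E a b"
    and "distinct (ys @ [v])" "set (ys @ [v]) = V2" "SE E (ys @ [v])" "distinct zs" "set zs = V1" "SE E zs"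
  shows "distinct (ys @ zs) \<and> set (ys @ zs) = V \<and> SE E (ys @ zs)"
proof -
  have sy: "set ys = V2 - {v}" using assms(4,5) by auto
  have vz: "v \<in> set zs" using assms(2,8) by blast
  have dis: "set ys \<inter> set zs = {}" using sy assms(2,8) by blast
  have cr: "\<And>a b. a \<in> set ys \<Longrightarrow> b \<in> set zs \<Longrightarrow> E a b \<Longrightarrow> b = v"
    using assms(3) sy assms(8) by blast
  have "SE E (ys @ zs)" by (rule glue_cut[OF assms(4) assms(7) vz dis cr assms(6) assms(9)])
  moreover have "distinct (ys @ zs)" using assms(4,7) dis by auto
  moreover have "set (ys @ zs) = V" using sy assms(1,2,8) by auto
  ultimately show ?thesis by blast
qed

lemma combine_disj:
  assumes un: "V1 \<union> V2 = V" and it: "V1 \<inter> V2 = {}" and nc: "\<And>a b. a \<in> V1 \<Longrightarrow> b \<in> V2 \<Longrightarrow> \<not> E a b"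
    and sym: "\<And>a b. E a b \<Longrightarrow> E b a" and q1: "Q E V1" and q2: "Q E V2"
  shows "Q E V"
proof -
  have nc': "\<And>a b. a \<in> V2 \<Longrightarrow> b \<in> V1 \<Longrightarrow> \<not> E a b" using nc sym by blast
  have un': "V2 \<union> V1 = V" and it': "V2 \<inter> V1 = {}" using un it by auto
  obtain ys where ys: "distinct ys" "set ys = V1" "SE E ys" using Q_ex[OF q1] by blast
  obtain zs where zs: "distinct zs" "set zs = V2" "SE E zs" using Q_ex[OF q2] by blast
  have "\<exists>vs. distinct vs \<and> set vs = V \<and> SE E vs"
    using disj_half[OF un it nc' zs ys] by blast
  moreover have "\<exists>vs. distinct (vs @ [c]) \<and> set (vs @ [c]) = V \<and> SE E (vs @ [c])"
    if c: "c \<in> V" "simpl E V c" for c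
  proof (cases "c \<in> V1")
    case True
    then have "simpl E V1 c" using simpl_sub[OF c(2)] un by blast
    then obtain xs where xs: "distinct (xs @ [c])" "set (xs @ [c]) = V1" "SE E (xs @ [c])"
      using Q_last[OF q1 True] by blast
    have "distinct (zs @ xs @ [c]) \<and> set (zs @ xs @ [c]) = V \<and> SE E (zs @ xs @ [c])"
      using disj_half[OF un it nc' zs xs] by simp
    then show ?thesis by (intro exI[of _ "zs @ xs"]) simp
  next
    case False
    then have c2: "c \<in> V2" using c un by blast
    then have "simpl E V2 c" using simpl_sub[OF c(2)] un by blast
    then obtain xs where xs: "distinct (xs @ [c])" "set (xs @ [c]) = V2" "SE E (xs @ [c])"
      using Q_last[OF q2 c2] by blast
    have "distinct (ys @ xs @ [c]) \<and> set (ys @ xs @ [c]) = V \<and> SE E (ys @ xs @ [c])"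
      using disj_half[OF un' it' nc ys xs] by simp
    then show ?thesis by (intro exI[of _ "ys @ xs"]) simp
  qed
  ultimately show ?thesis using Q_intro by blast
qed

lemma combine_cut:
  assumes un: "V1 \<union> V2 = V" and it: "V1 \<inter> V2 = {v}"
    and nc: "\<And>a b. a \<in> V1 - {v} \<Longrightarrow> b \<in> V2 - {v} \<Longrightarrow> \<not> E a b"
    and sym: "\<And>a b. E a b \<Longrightarrow> E b a" and q1: "Q E V1" and q2: "Q E V2"
    and s1: "simpl E V1 v" and s2: "simpl E V2 v" and ns: "\<not> simpl E V v"
  shows "Q E V"
proof -
  have nc': "\<And>a b. a \<in> V2 - {v} \<Longrightarrow> b \<in> V1 - {v} \<Longrightarrow> \<not> E a b" using nc sym by blast
  have un': "V2 \<union> V1 = V" and it': "V2 \<inter> V1 = {v}" using un it by auto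
  have v1: "v \<in> V1" and v2: "v \<in> V2" using it by auto
  obtain ys where ys: "distinct ys" "set ys = V1" "SE E ys" using Q_ex[OF q1] by blast
  obtain zs where zs: "distinct zs" "set zs = V2" "SE E zs" using Q_ex[OF q2] by blast
  obtain ys' where ys': "distinct (ys' @ [v])" "set (ys' @ [v]) = V1" "SE E (ys' @ [v])"
    using Q_last[OF q1 v1 s1] by blast
  obtain zs' where zs': "distinct (zs' @ [v])" "set (zs' @ [v]) = V2" "SE E (zs' @ [v])"
    using Q_last[OF q2 v2 s2] by blast
  have "\<exists>vs. distinct vs \<and> set vs = V \<and> SE E vs"
    using cut_half[OF un it nc' zs' ys] by blast
  moreover have "\<exists>vs. distinct (vs @ [c]) \<and> set (vs @ [c]) = V \<and> SE E (vs @ [c])"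
    if c: "c \<in> V" "simpl E V c" for c
  proof -
    have cv: "c \<noteq> v" using c ns by blast
    show ?thesis
    proof (cases "c \<in> V1")
      case True
      then have "simpl E V1 c" using simpl_sub[OF c(2)] un by blast
      then obtain xs where xs: "distinct (xs @ [c])" "set (xs @ [c]) = V1" "SE E (xs @ [c])"
        using Q_last[OF q1 True] by blast
      have "distinct (zs' @ xs @ [c]) \<and> set (zs' @ xs @ [c]) = V \<and> SE E (zs' @ xs @ [c])"
        using cut_half[OF un it nc' zs' xs] by simp
      then show ?thesis by (intro exI[of _ "zs' @ xs"]) simp
    next
      case False
      then have c2: "c \<in> V2" using c un by blast
      then have "simpl E V2 c" using simpl_sub[OF c(2)] un by blast
      then obtain xs where xs: "distinct (xs @ [c])" "set (xs @ [c]) = V2" "SE E (xs @ [c])"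
        using Q_last[OF q2 c2] by blast
      have "distinct (ys' @ xs @ [c]) \<and> set (ys' @ xs @ [c]) = V \<and> SE E (ys' @ xs @ [c])"
        using cut_half[OF un' it' nc ys' xs] by simp
      then show ?thesis by (intro exI[of _ "ys' @ xs"]) simp
    qed
  qed
  ultimately show ?thesis using Q_intro by blast
qed

lemma main:
  assumes "finite V" "\<And>a b. E a b \<Longrightarrow> E b a" "\<And>a. \<not> E a a" "claw_free V E"
    "\<And>B. is_block V E B \<Longrightarrow> closed_graph B (induced E B)"
  shows "Q E V"
  using assms
proof (induction "card V" arbitrary: V rule: less_induct)
  case less
  note fin = less.prems(1) and sym = less.prems(2) and irr = less.prems(3)
    and cf = less.prems(4) and blocks = less.prems(5)
  have IH: "\<And>W. W \<subset> V \<Longrightarrow> claw_free W E \<Longrightarrow> (\<And>B. is_block W E B \<Longrightarrow> closed_graph B (induced E B)) \<Longrightarrow> Q E W"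
  proof -
    fix W assume W: "W \<subset> V" "claw_free W E" "\<And>B. is_block W E B \<Longrightarrow> closed_graph B (induced E B)"
    have "card W < card V" using psubset_card_mono[OF fin W(1)] .
    moreover have "finite W" using W(1) fin finite_subset by blast
    ultimately show "Q E W" using less.hyps[of W] W sym irr by blast
  qed
  show ?case
  proof (cases "V = {}")
    case True
    show ?thesis
    proof (rule Q_intro)
      show "\<exists>vs. distinct vs \<and> set vs = V \<and> SE E vs" using True SE_Nil by (intro exI[of _ "[]"]) auto
    next
      fix c assume "c \<in> V" then show "\<exists>vs. distinct (vs @ [c]) \<and> set (vs @ [c]) = V \<and> SE E (vs @ [c])"
        using True by simp
    qed
  next
    case ne: False
    show ?thesis
    proof (cases "nonseparable_on E V")
      case True
      have "is_block V E V" unfolding is_block_def using True by blast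
      then have "closed_graph V (induced E V)" using blocks by blast
      then obtain \<tau> where t: "distinct \<tau>" "set \<tau> = V" "closed_order (induced E V) \<tau>"
        unfolding closed_graph_def ordering_of_def by blast
      have cl: "CL E \<tau>" using CL_induced[OF closed_CL[OF t(1) t(3)] t(2)] .
      have cn: "conn E (set \<tau>)" using True t(2)
        unfolding conn_def nonseparable_on_def connected_on_def joined_in_def by blast
      have cp: "CP E \<tau>" using CP_from_conn[OF t(1) cl cn] sym irr by blast
      have se: "SE E \<tau>" using CL_SE[OF cl t(1)] sym by blast
      show ?thesis
      proof (rule Q_intro)
        show "\<exists>vs. distinct vs \<and> set vs = V \<and> SE E vs" using t se by blast
      next
        fix c assume c: "c \<in> V" "simpl E V c"
        have "\<And>x y. x \<in> set \<tau> \<Longrightarrow> y \<in> set \<tau> \<Longrightarrow> E c x \<Longrightarrow> E c y \<Longrightarrow> x \<noteq> y \<Longrightarrow> E x y"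
          using c(2) t(2) unfolding simpl_def by blast
        then show "\<exists>vs. distinct (vs @ [c]) \<and> set (vs @ [c]) = V \<and> SE E (vs @ [c])"
          using block_last[OF t(1) cl cp _ _ _] sym irr c(1) t(2) by blast
      qed
    next
      case False
      have sep: "(\<exists>V1 V2. V1 \<union> V2 = V \<and> V1 \<inter> V2 = {} \<and> V1 \<noteq> {} \<and> V2 \<noteq> {} \<and> (\<forall>a\<in>V1. \<forall>b\<in>V2. \<not> E a b))
     \<or> (\<exists>V1 V2 v. V1 \<union> V2 = V \<and> V1 \<inter> V2 = {v} \<and> (\<exists>a\<in>V1. a \<noteq> v \<and> E v a) \<and> (\<exists>b\<in>V2. b \<noteq> v \<and> E v b)
          \<and> (\<forall>a\<in>V1-{v}. \<forall>b\<in>V2-{v}. \<not> E a b))"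
        by (rule separation[OF ne False sym])
      then show ?thesis
      proof (elim disjE exE conjE)
        fix V1 V2 assume D: "V1 \<union> V2 = V" "V1 \<inter> V2 = {}" "V1 \<noteq> {}" "V2 \<noteq> {}"
          "\<forall>a\<in>V1. \<forall>b\<in>V2. \<not> E a b"
        have nc: "\<And>a b. a \<in> V1 \<Longrightarrow> b \<in> V2 \<Longrightarrow> \<not> E a b" using D(5) by blast
        have nc': "\<And>a b. a \<in> V2 \<Longrightarrow> b \<in> V1 \<Longrightarrow> \<not> E a b" using nc sym by blast
        have s1: "V1 \<subset> V" using D by blast
        have s2: "V2 \<subset> V" using D by blast
        have q1: "Q E V1"
        proof (rule IH[OF s1 claw_sub[OF cf]])
          show "V1 \<subseteq> V" using s1 by blast
        next
          fix B assume "is_block V1 E B"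
          then have "is_block V E B"
            by (rule block_transfer[of V1 E B V2 V undefined]) (use D nc sym in auto)
          then show "closed_graph B (induced E B)" using blocks by blast
        qed
        have q2: "Q E V2"
        proof (rule IH[OF s2 claw_sub[OF cf]])
          show "V2 \<subseteq> V" using s2 by blast
        next
          fix B assume "is_block V2 E B"
          then have "is_block V E B"
            by (rule block_transfer[of V2 E B V1 V undefined]) (use D nc' sym in auto)
          then show "closed_graph B (induced E B)" using blocks by blast
        qed
        show ?thesis using combine_disj[OF D(1) D(2) nc sym q1 q2] .
      next
        fix V1 V2 v assume C: "V1 \<union> V2 = V" "V1 \<inter> V2 = {v}" "\<exists>a\<in>V1. a \<noteq> v \<and> E v a"
          "\<exists>b\<in>V2. b \<noteq> v \<and> E v b" "\<forall>a\<in>V1-{v}. \<forall>b\<in>V2-{v}. \<not> E a b"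
        have nc: "\<And>a b. a \<in> V1 - {v} \<Longrightarrow> b \<in> V2 - {v} \<Longrightarrow> \<not> E a b" using C(5) by blast
        have nc': "\<And>a b. a \<in> V2 - {v} \<Longrightarrow> b \<in> V1 - {v} \<Longrightarrow> \<not> E a b" using nc sym by blast
        obtain a where a: "a \<in> V1" "a \<noteq> v" "E v a" using C(3) by blast
        obtain b where b: "b \<in> V2" "b \<noteq> v" "E v b" using C(4) by blast
        have aV2: "a \<notin> V2" using a C(2) by blast
        have bV1: "b \<notin> V1" using b C(2) by blast
        have v12: "v \<in> V1" "v \<in> V2" using C(2) by blast+
        have s1: "V1 \<subset> V" using C(1) b bV1 by blast
        have s2: "V2 \<subset> V" using C(1) a aV2 by blast
        have q1: "Q E V1"
        proof (rule IH[OF s1 claw_sub[OF cf]])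
          show "V1 \<subseteq> V" using s1 by blast
        next
          fix B assume "is_block V1 E B"
          then have "is_block V E B"
          proof (rule block_transfer[of V1 E B V2 V v])
            show "V1 \<union> V2 = V" "V1 \<inter> V2 \<subseteq> {v}" using C(1,2) by auto
            show "\<And>a b. a \<in> V1 - V2 \<Longrightarrow> b \<in> V2 - V1 \<Longrightarrow> \<not> E a b"
            proof -
              fix a' b' assume "a' \<in> V1 - V2" "b' \<in> V2 - V1"
              then have "a' \<in> V1 - {v}" "b' \<in> V2 - {v}" using v12 by auto
              then show "\<not> E a' b'" by (rule nc)
            qed
            show "\<exists>w\<in>V1. w \<noteq> v \<and> E v w" using a by (intro bexI[of _ a]) auto
            show "\<And>a b. E a b \<Longrightarrow> E b a" by (rule sym)
          qed
          then show "closed_graph B (induced E B)" using blocks by blast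
        qed
        have q2: "Q E V2"
        proof (rule IH[OF s2 claw_sub[OF cf]])
          show "V2 \<subseteq> V" using s2 by blast
        next
          fix B assume "is_block V2 E B"
          then have "is_block V E B"
          proof (rule block_transfer[of V2 E B V1 V v])
            show "V2 \<union> V1 = V" "V2 \<inter> V1 \<subseteq> {v}" using C(1,2) by auto
            show "\<And>a b. a \<in> V2 - V1 \<Longrightarrow> b \<in> V1 - V2 \<Longrightarrow> \<not> E a b"
            proof -
              fix a' b' assume "a' \<in> V2 - V1" "b' \<in> V1 - V2"
              then have "a' \<in> V2 - {v}" "b' \<in> V1 - {v}" using v12 by auto
              then show "\<not> E a' b'" by (rule nc')
            qed
            show "\<exists>w\<in>V2. w \<noteq> v \<and> E v w" using b by (intro bexI[of _ b]) auto
            show "\<And>a b. E a b \<Longrightarrow> E b a" by (rule sym)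
          qed
          then show "closed_graph B (induced E B)" using blocks by blast
        qed
        have sv1: "simpl E V1 v"
        proof (rule claw_simpl[OF cf])
          show "V1 \<subseteq> V" "v \<in> V1" "b \<in> V" "b \<notin> V1" "E v b" using s1 v12 b bV1 C(1) by blast+
          show "\<And>x. x \<in> V1 \<Longrightarrow> x \<noteq> v \<Longrightarrow> \<not> E x b" using nc b by blast
          show "\<And>a. \<not> E a a" by (rule irr)
        qed
        have sv2: "simpl E V2 v"
        proof (rule claw_simpl[OF cf])
          show "V2 \<subseteq> V" "v \<in> V2" "a \<in> V" "a \<notin> V2" "E v a" using s2 v12 a aV2 C(1) by blast+
          show "\<And>x. x \<in> V2 \<Longrightarrow> x \<noteq> v \<Longrightarrow> \<not> E x a" using nc' a by blast
          show "\<And>a. \<not> E a a" by (rule irr)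
        qed
        have nsv: "\<not> simpl E V v"
        proof
          assume "simpl E V v"
          moreover have "a \<in> V" "b \<in> V" "a \<noteq> b" using a b C(1) aV2 by blast+
          ultimately have "E a b" using a b unfolding simpl_def by blast
          then show False using nc a b by blast
        qed
        show ?thesis using combine_cut[OF C(1) C(2) nc sym q1 q2 sv1 sv2 nsv] .
      qed
    qed
  qed
qed

theorem mainTheorem16:
  fixes V :: "'a set" and E :: "'a \<Rightarrow> 'a \<Rightarrow> bool"
  assumes "finite_simple_graph V E"
    and "claw_free V E"
    and "\<forall>B. is_block V E B \<longrightarrow> closed_graph B (induced E B)"
  shows "strongly_chordal V E \<and> claw_free V E"
proof -
  have f: "finite V" and sym: "\<And>a b. E a b \<Longrightarrow> E b a" and irr: "\<And>a. \<not> E a a"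
    using assms(1) unfolding finite_simple_graph_def by blast+
  have "Q E V" using main[OF f sym irr assms(2)] assms(3) by blast
  then obtain vs where "distinct vs" "set vs = V" "SE E vs" using Q_ex by blast
  then have "strongly_chordal V E"
    unfolding strongly_chordal_def ordering_of_def using SE_strong by blast
  then show ?thesis using assms(2) by blast
qed

end
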